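(* Assume the setting below with $Y_i(0)=0$ for all $i$. Let $1\le k_1\le k_2\le\dots\le k_J\le N$, and for each $j$ let $$k_j(\alpha)=N_1-Q_{\mathrm H}(1-\alpha;N,N-k_j,N_1).$$ Then $$\Pr\Big(\bigcap_{j=1}^J\{\tau_{(k_j)}\ge y_{(k_j(\alpha))}\}\Big)\ \ge\ 1-\Pr\Big(\bigcup_{j=1}^J\Big\{\sum_{i=1}^N Z_i\mathbb{1}(i>k_j)>Q_{\mathrm H}(1-\alpha;N,N-k_j,N_1)\Big\}\Big).$$ Equality holds when all ITEs $\tau_1,\dots,\tau_N$ are distinct. On the right-hand side, $Z$ is the CRE assignment vector; the right-hand side depends only on $N,N_1,\alpha,k_1,\dots,k_J$.
   Context: Setting: - There are $N$ units with fixed potential outcomes $Y_i(1),Y_i(0)$ and ITE $\tau_i=Y_i(1)-Y_i(0)$. - The sorted ITEs are $\tau_{(1)}\le\dots\le\tau_{(N)}$. - CRE: the assignment vector $Z\in\{0,1\}^N$ is uniformly distributed over vectors with exactly $N_1$ ones, where $1\le N_1<N$. - The observed outcome is $Y_i=Z_iY_i(1)+(1-Z_i)Y_i(0)$. - $Q_{\mathrm H}(\theta;N,n,N_1)=\inf\{x:\Pr(X\le x)\ge\theta\}$ is the $\theta$-quantile of a Hypergeometric random variable $X$ with parameters $(N,n,N_1)$ (population size $N$, $n$ marked items, sample size $N_1$). - $y_{(1)}\le\dots\le y_{(N_1)}$ are the sorted observed outcomes of the treated units, with $y_{(0)}=-\infty$. *)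

theory Defs
  imports "HOL-Probability.Probability"
begin

(* Units are indexed 1..N. An assignment is represented by the set of treated units,
   i.e. Z_i = 1 iff i \<in> Z. *)

definition cre_assignments :: "nat \<Rightarrow> nat \<Rightarrow> nat set set" where
  "cre_assignments N N1 = {Z. Z \<subseteq> {1..N} \<and> card Z = N1}"

definition CRE :: "nat \<Rightarrow> nat \<Rightarrow> nat set pmf" where
  "CRE N N1 = pmf_of_set (cre_assignments N N1)"

(* CDF of Hypergeometric(N, n, N1): population N, n marked, sample size N1 *)
definition hyper_cdf :: "nat \<Rightarrow> nat \<Rightarrow> nat \<Rightarrow> nat \<Rightarrow> real" where
  "hyper_cdf N n N1 x =
     (\<Sum>i\<in>{..min x N1}. real (n choose i) * real ((N - n) choose (N1 - i))) / real (N choose N1)"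

(* theta-quantile Q_H(theta; N, n, N1) = inf {x. P(X \<le> x) \<ge> theta};
   for theta > 0 the infimum is attained at a nonnegative integer *)
definition Q_H :: "real \<Rightarrow> nat \<Rightarrow> nat \<Rightarrow> nat \<Rightarrow> nat" where
  "Q_H \<theta> N n N1 = (LEAST x::nat. hyper_cdf N n N1 x \<ge> \<theta>)"

definition tau_ord :: "nat \<Rightarrow> (nat \<Rightarrow> real) \<Rightarrow> nat \<Rightarrow> real" where
  "tau_ord N \<tau> k = sort (map \<tau> [1..<N+1]) ! (k - 1)"

definition y_ord :: "(nat \<Rightarrow> real) \<Rightarrow> (nat \<Rightarrow> real) \<Rightarrow> nat set \<Rightarrow> nat \<Rightarrow> ereal" where
  "y_ord Y1 Y0 Z m = (if m = 0 then -\<infinity>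
     else ereal (sort (map (\<lambda>i. if i \<in> Z then Y1 i else Y0 i) (sorted_list_of_set Z)) ! (m - 1)))"

end

theory Submission
  imports Defs
begin

lemma sort_map_key: "sort (map (f::'a \<Rightarrow> 'b::linorder) xs) = map f (sort_key f xs)"
  by (rule properties_for_sort) simp_all

lemma sorted_nth_le_iff:
  fixes ys :: "real list"
  assumes "sorted ys" "1 \<le> m" "m \<le> length ys"
  shows "(ys!(m-1) \<le> t) \<longleftrightarrow> m \<le> card {j. j < length ys \<and> ys!j \<le> t}"
proof
  assume h: "ys!(m-1) \<le> t"
  have "{..<m} \<subseteq> {j. j < length ys \<and> ys!j \<le> t}"
  proof
    fix j assume "j \<in> {..<m}"
    then have "j \<le> m - 1" "j < length ys" "m - 1 < length ys" using assms by auto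
    then have "ys!j \<le> ys!(m-1)" using assms(1) by (rule_tac sorted_nth_mono) auto
    then show "j \<in> {j. j < length ys \<and> ys!j \<le> t}" using h \<open>j < length ys\<close> by auto
  qed
  from card_mono[OF _ this] show "m \<le> card {j. j < length ys \<and> ys!j \<le> t}" by simp
next
  assume h: "m \<le> card {j. j < length ys \<and> ys!j \<le> t}"
  show "ys!(m-1) \<le> t"
  proof (rule ccontr)
    assume c: "\<not> ys!(m-1) \<le> t"
    have "{j. j < length ys \<and> ys!j \<le> t} \<subseteq> {..<m-1}"
    proof
      fix j assume j: "j \<in> {j. j < length ys \<and> ys!j \<le> t}"
      show "j \<in> {..<m-1}"
      proof (rule ccontr)
        assume "j \<notin> {..<m-1}"
        then have "m - 1 \<le> j" by auto
        then have "ys!(m-1) \<le> ys!j" using assms(1) j by (rule_tac sorted_nth_mono) auto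
        then show False using c j by auto
      qed
    qed
    from card_mono[OF _ this] h assms show False by simp
  qed
qed

lemma y_ord_le:
  assumes "finite Z" "m \<le> card Z"
  shows "(y_ord Y1 Y0 Z m \<le> ereal t) \<longleftrightarrow> m \<le> card {i\<in>Z. Y1 i \<le> t}"
proof (cases "m = 0")
  case True then show ?thesis by (simp add: y_ord_def)
next
  case False
  define sl where "sl = sorted_list_of_set Z"
  have sl: "set sl = Z" "distinct sl" "length sl = card Z" using assms sl_def by auto
  have mp: "map (\<lambda>i. if i \<in> Z then Y1 i else Y0 i) sl = map Y1 sl"
    using sl by (auto intro: map_cong)
  define ys where "ys = sort (map Y1 sl)"
  have yd: "y_ord Y1 Y0 Z m = ereal (ys!(m-1))" using False by (simp add: y_ord_def ys_def mp flip: sl_def)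
  have len: "length ys = card Z" using sl by (simp add: ys_def)
  have "card {j. j < length ys \<and> ys!j \<le> t} = length (filter (\<lambda>y. y \<le> t) ys)"
    by (simp add: length_filter_conv_card)
  also have "\<dots> = length (filter (\<lambda>y. y \<le> t) (map Y1 sl))"
    unfolding ys_def by (simp only: filter_sort length_sort)
  also have "\<dots> = length (filter (\<lambda>i. Y1 i \<le> t) sl)" by (simp add: filter_map comp_def)
  also have "\<dots> = card ({i. Y1 i \<le> t} \<inter> set sl)" using sl(2) by (rule distinct_length_filter)
  also have "\<dots> = card {i\<in>Z. Y1 i \<le> t}" using sl(1) by (simp add: Int_def conj_commute)
  finally have cc: "card {j. j < length ys \<and> ys!j \<le> t} = card {i\<in>Z. Y1 i \<le> t}" .
  have "sorted ys" by (simp add: ys_def)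
  from sorted_nth_le_iff[OF this, of m t] False assms len cc yd show ?thesis by simp
qed


lemma sum_ind_card:
  fixes N k :: nat and Z :: "nat set"
  assumes "Z \<subseteq> {1..N}"
  shows "(\<Sum>i\<in>{1..N}. of_bool (i \<in> Z) * of_bool (i > k) :: nat) = card (Z \<inter> {k<..N})"
proof -
  have "(\<Sum>i\<in>{1..N}. of_bool (i \<in> Z) * of_bool (i > k) :: nat) = (\<Sum>i\<in>{1..N}. of_bool (i \<in> Z \<and> i > k))"
    by (intro sum.cong) auto
  also have "\<dots> = card ({1..N} \<inter> {i. i \<in> Z \<and> i > k})"
    by (subst sum_of_bool_eq) auto
  also have "{1..N} \<inter> {i. i \<in> Z \<and> i > k} = Z \<inter> {k<..N}" using assms by auto
  finally show ?thesis .
qed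

theorem proposition3:
  fixes N N1 :: nat and Y1 Y0 :: "nat \<Rightarrow> real" and \<alpha> :: real and ks :: "nat list"
  assumes "1 \<le> N1" and "N1 < N"
    and "\<forall>i. Y0 i = 0"
    and "0 < \<alpha>" and "\<alpha> < 1"
    and "sorted ks" and "\<forall>k\<in>set ks. 1 \<le> k \<and> k \<le> N"
  defines "\<tau> \<equiv> (\<lambda>i. Y1 i - Y0 i)"
  defines "k\<alpha> \<equiv> (\<lambda>k. N1 - Q_H (1 - \<alpha>) N (N - k) N1)"
  defines "lhs \<equiv> measure_pmf.prob (CRE N N1)
             {Z. \<forall>k\<in>set ks. ereal (tau_ord N \<tau> k) \<ge> y_ord Y1 Y0 Z (k\<alpha> k)}"
  defines "rhs \<equiv> 1 - measure_pmf.prob (CRE N N1)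
             {Z. \<exists>k\<in>set ks. (\<Sum>i\<in>{1..N}. of_bool (i \<in> Z) * of_bool (i > k) :: nat)
                                 > Q_H (1 - \<alpha>) N (N - k) N1}"
  shows "lhs \<ge> rhs \<and> (inj_on \<tau> {1..N} \<longrightarrow> lhs = rhs)"
proof -
  define Qf where "Qf k = Q_H (1 - \<alpha>) N (N - k) N1" for k
  have tY: "\<tau> i = Y1 i" for i using assms(3) by (simp add: \<tau>_def)
  define L where "L = sort_key \<tau> [1..<N+1]"
  have Ll: "length L = N" and Ld: "distinct L" and Ls: "set L = {1..N}" and Lsort: "sorted (map \<tau> L)"
    by (auto simp: L_def)
  define g where "g j = L!(j-1)" for j
  have ginj: "inj_on g {1..N}"
  proof
    fix a b assume "a \<in> {1..N}" "b \<in> {1..N}" "g a = g b"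
    then have "L!(a-1) = L!(b-1)" by (simp add: g_def)
    moreover have "a-1 < length L" "b-1 < length L" using \<open>a \<in> {1..N}\<close> \<open>b \<in> {1..N}\<close> Ll by auto
    ultimately have "a - 1 = b - 1" using nth_eq_iff_index_eq[OF Ld] by blast
    then show "a = b" using \<open>a \<in> {1..N}\<close> \<open>b \<in> {1..N}\<close> by auto
  qed
  have gim: "g ` {1..N} = {1..N}"
  proof
    show "g ` {1..N} \<subseteq> {1..N}"
    proof
      fix x assume "x \<in> g ` {1..N}"
      then obtain j where "j \<in> {1..N}" "x = L!(j-1)" by (auto simp: g_def)
      then have "x \<in> set L" using Ll by auto
      then show "x \<in> {1..N}" using Ls by simp
    qed
    show "{1..N} \<subseteq> g ` {1..N}"
    proof
      fix x assume "x \<in> {1..N}"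
      then obtain j where j: "j < N" "L!j = x" using Ls Ll by (metis in_set_conv_nth)
      then have "g (j+1) = x" "j + 1 \<in> {1..N}" by (auto simp: g_def)
      then show "x \<in> g ` {1..N}" by (metis image_eqI)
    qed
  qed
  have sL: "sort (map \<tau> [1..<N+1]) = map \<tau> L" by (simp only: L_def sort_map_key)
  have tau_g: "tau_ord N \<tau> k = \<tau> (g k)" if "k \<in> {1..N}" for k
    using that Ll unfolding tau_ord_def sL g_def by (subst nth_map) auto
  have gmono: "\<tau> (g j) \<le> \<tau> (g k)" if "j \<in> {1..N}" "k \<in> {1..N}" "j \<le> k" for j k
  proof -
    have "(map \<tau> L)!(j-1) \<le> (map \<tau> L)!(k-1)"
      using Lsort that Ll by (intro sorted_nth_mono) auto
    then show ?thesis using that Ll by (simp add: g_def)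
  qed
  define C where "C = cre_assignments N N1"
  have Cfin: "finite C" unfolding C_def cre_assignments_def
    by (rule finite_subset[of _ "Pow {1..N}"]) auto
  have Cne: "C \<noteq> {}"
  proof -
    have "{1..N1} \<in> C" using assms(2) by (auto simp: C_def cre_assignments_def)
    then show ?thesis by auto
  qed
  have Cmem: "Z \<subseteq> {1..N} \<and> card Z = N1" if "Z \<in> C" for Z using that by (simp add: C_def cre_assignments_def)
  define E where "E = {Z. \<forall>k\<in>set ks. ereal (tau_ord N \<tau> k) \<ge> y_ord Y1 Y0 Z (k\<alpha> k)}"
  define B where "B = {Z. \<exists>k\<in>set ks. (\<Sum>i\<in>{1..N}. of_bool (i \<in> Z) * of_bool (i > k) :: nat) > Qf k}"
  define B' where "B' = {Z. \<exists>k\<in>set ks. card (Z \<inter> g ` {k<..N}) > Qf k}"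
  have lhs_eq: "lhs = card (C \<inter> E) / card C"
    unfolding lhs_def CRE_def E_def C_def
    using measure_pmf_of_set[OF Cne[unfolded C_def] Cfin[unfolded C_def]] by simp
  have rhs_eq: "rhs = 1 - card (C \<inter> B) / card C"
    unfolding rhs_def CRE_def B_def C_def Qf_def
    using measure_pmf_of_set[OF Cne[unfolded C_def] Cfin[unfolded C_def]] by simp
  \<comment> \<open>permutation invariance\<close>
  have cardB: "card (C \<inter> B) = card (C \<inter> B')"
  proof -
    have key: "card (g ` Z \<inter> g ` {k<..N}) = card (Z \<inter> {k<..N})" if "Z \<subseteq> {1..N}" "k \<ge> 1" for Z k
    proof -
      have "g ` Z \<inter> g ` {k<..N} = g ` (Z \<inter> {k<..N})"
        using that by (intro inj_on_image_Int[OF ginj, symmetric]) auto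
      moreover have "inj_on g (Z \<inter> {k<..N})" using that inj_on_subset[OF ginj] by (meson Int_lower1 subset_trans)
      ultimately show ?thesis by (simp add: card_image)
    qed
    have inC: "g ` Z \<in> C" if "Z \<in> C" for Z
    proof -
      have "inj_on g Z" using Cmem[OF that] inj_on_subset[OF ginj] by blast
      then show ?thesis using Cmem[OF that] gim by (auto simp: C_def cre_assignments_def card_image)
    qed
    have BB: "g ` Z \<in> B' \<longleftrightarrow> Z \<in> B" if "Z \<in> C" for Z
    proof -
      have eqk: "card (g ` Z \<inter> g ` {k<..N}) = (\<Sum>i\<in>{1..N}. of_bool (i \<in> Z) * of_bool (i > k) :: nat)"
        if "k \<in> set ks" for k
      proof -
        have "k \<ge> 1" using that assms(7) by blast
        then show ?thesis using key[of Z k] sum_ind_card[of Z N k] Cmem[OF \<open>Z \<in> C\<close>] by simp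
      qed
      show ?thesis unfolding B_def B'_def mem_Collect_eq
        by (rule bex_cong[OF refl]) (simp add: eqk)
    qed
    have inj2: "inj_on (image g) (C \<inter> B)"
    proof
      fix Z W assume "Z \<in> C \<inter> B" "W \<in> C \<inter> B" "g ` Z = g ` W"
      then have "Z \<subseteq> {1..N}" "W \<subseteq> {1..N}" using Cmem by auto
      then show "Z = W" using inj_on_image_eq_iff[OF ginj] \<open>g ` Z = g ` W\<close> by simp
    qed
    have "image g ` (C \<inter> B) = C \<inter> B'"
    proof
      show "image g ` (C \<inter> B) \<subseteq> C \<inter> B'" using inC BB by blast
      show "C \<inter> B' \<subseteq> image g ` (C \<inter> B)"
      proof
        fix W assume W: "W \<in> C \<inter> B'"
        define Z where "Z = inv_into {1..N} g ` W"
        have gz: "g ` Z = W" unfolding Z_def using Cmem W gim by (intro image_inv_into_cancel) auto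
        have Wsub: "W \<subseteq> g ` {1..N}" using Cmem W gim by auto
        have Zsub: "Z \<subseteq> {1..N}" unfolding Z_def using Wsub inv_into_into[of _ g "{1..N}"] by blast
        have "card Z = card W" using gz Zsub inj_on_subset[OF ginj Zsub] card_image by metis
        moreover have "card W = N1" using Cmem W by blast
        ultimately have ZC: "Z \<in> C" using Zsub unfolding C_def cre_assignments_def by simp
        then have "Z \<in> B" using BB[OF ZC] W gz by simp
        then show "W \<in> image g ` (C \<inter> B)" using ZC gz by auto
      qed
    qed
    then show ?thesis using card_image[OF inj2] by simp
  qed
  have cnt: "card (Z \<inter> g ` {1..k}) + card (Z \<inter> g ` {k<..N}) = N1" if "Z \<in> C" "k \<in> {1..N}" for Z k
  proof -
    have "g ` {1..k} \<inter> g ` {k<..N} = g ` ({1..k} \<inter> {k<..N})"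
      using that by (intro inj_on_image_Int[OF ginj, symmetric]) auto
    also have "{1..k} \<inter> {k<..N} = {}" by auto
    finally have d: "g ` {1..k} \<inter> g ` {k<..N} = {}" by simp
    have u0: "{1..k} \<union> {k<..N} = {1..N}" using that by auto
    have "g ` {1..k} \<union> g ` {k<..N} = {1..N}" using gim unfolding image_Un[symmetric] u0 .
    then have e1: "(Z \<inter> g ` {1..k}) \<union> (Z \<inter> g ` {k<..N}) = Z"
      using Cmem[OF that(1)] by blast
    have e2: "(Z \<inter> g ` {1..k}) \<inter> (Z \<inter> g ` {k<..N}) = {}" using d by blast
    have fZ: "finite Z" using Cmem[OF that(1)] finite_subset by blast
    have "card ((Z \<inter> g ` {1..k}) \<union> (Z \<inter> g ` {k<..N})) = card (Z \<inter> g ` {1..k}) + card (Z \<inter> g ` {k<..N})"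
      by (rule card_Un_disjoint) (use fZ e2 in auto)
    then show ?thesis unfolding e1 using Cmem[OF that(1)] by simp
  qed
  have Ecount: "Z \<in> E \<longleftrightarrow> (\<forall>k\<in>set ks. k\<alpha> k \<le> card {i\<in>Z. \<tau> i \<le> \<tau> (g k)})" if "Z \<in> C" for Z
  proof -
    have fZ: "finite Z" using Cmem[OF that] finite_subset by blast
    have "k\<alpha> k \<le> card Z" for k using Cmem[OF that] by (simp add: k\<alpha>_def)
    then show ?thesis using y_ord_le[OF fZ] assms(7) tau_g tY unfolding E_def by auto
  qed
  have T_sub: "Z \<inter> g ` {1..k} \<subseteq> {i\<in>Z. \<tau> i \<le> \<tau> (g k)}" if "k \<in> {1..N}" for Z k
    using gmono that by auto
  have sub1: "C - B' \<subseteq> C \<inter> E"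
  proof
    fix Z assume Z: "Z \<in> C - B'"
    have fZ: "finite Z" using Cmem Z finite_subset by blast
    have "k\<alpha> k \<le> card {i\<in>Z. \<tau> i \<le> \<tau> (g k)}" if k: "k \<in> set ks" for k
    proof -
      have kN: "k \<in> {1..N}" using k assms(7) by auto
      have "card (Z \<inter> g ` {k<..N}) \<le> Qf k" using Z k by (auto simp: B'_def)
      moreover have "card (Z \<inter> g ` {1..k}) \<le> card {i\<in>Z. \<tau> i \<le> \<tau> (g k)}"
        using T_sub[OF kN] fZ by (intro card_mono) auto
      ultimately show ?thesis using cnt[of Z k] Z kN by (simp add: k\<alpha>_def Qf_def)
    qed
    then show "Z \<in> C \<inter> E" using Ecount Z by auto
  qed
  have sub2: "C \<inter> E \<subseteq> C - B'" if inj: "inj_on \<tau> {1..N}"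
  proof
    fix Z assume Z: "Z \<in> C \<inter> E"
    have fZ: "finite Z" using Cmem Z finite_subset by blast
    have "\<not> card (Z \<inter> g ` {k<..N}) > Qf k" if k: "k \<in> set ks" for k
    proof -
      have kN: "k \<in> {1..N}" using k assms(7) by auto
      have "{i\<in>Z. \<tau> i \<le> \<tau> (g k)} \<subseteq> Z \<inter> g ` {1..k}"
      proof
        fix i assume i: "i \<in> {i\<in>Z. \<tau> i \<le> \<tau> (g k)}"
        then have "i \<in> {1..N}" using Cmem Z by blast
        then have "i \<in> g ` {1..N}" unfolding gim .
        then obtain j where j: "j \<in> {1..N}" "i = g j" by blast
        have "j \<le> k"
        proof (rule ccontr)
          assume "\<not> j \<le> k"
          then have "\<tau> (g k) \<le> \<tau> (g j)" "g k \<noteq> g j" using gmono[OF kN j(1)] inj_onD[OF ginj, of k j] kN j by auto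
          moreover have "\<tau> (g k) \<noteq> \<tau> (g j)" using inj_onD[OF inj] \<open>g k \<noteq> g j\<close> gim kN j by blast
          ultimately show False using i j by auto
        qed
        then show "i \<in> Z \<inter> g ` {1..k}" using i j by auto
      qed
      then have "card {i\<in>Z. \<tau> i \<le> \<tau> (g k)} \<le> card (Z \<inter> g ` {1..k})"
        using fZ by (intro card_mono) auto
      moreover have "k\<alpha> k \<le> card {i\<in>Z. \<tau> i \<le> \<tau> (g k)}" using Ecount Z k by auto
      ultimately show ?thesis using cnt[of Z k] Z kN by (simp add: k\<alpha>_def Qf_def)
    qed
    then show "Z \<in> C - B'" using Z by (auto simp: B'_def)
  qed
  have cardCB: "card (C - B') = card C - card (C \<inter> B')"
    by (metis Cfin Diff_Int2 Diff_Int_distrib2 card_Diff_subset_Int finite_Int inf.idem inf_le1)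
  have le: "card (C \<inter> B') \<le> card C" using Cfin by (simp add: card_mono)
  have Cpos: "card C > 0" using Cfin Cne by (simp add: card_gt_0_iff)
  have rhs2: "rhs = real (card (C - B')) / card C"
    using rhs_eq cardB cardCB le Cpos by (simp add: field_simps of_nat_diff)
  have "card (C - B') \<le> card (C \<inter> E)" using sub1 Cfin by (intro card_mono) auto
  then have ge: "lhs \<ge> rhs" using lhs_eq rhs2 Cpos by (simp add: divide_right_mono)
  moreover have "inj_on \<tau> {1..N} \<longrightarrow> lhs = rhs"
  proof
    assume "inj_on \<tau> {1..N}"
    then have "C \<inter> E = C - B'" using sub1 sub2 by blast
    then show "lhs = rhs" using lhs_eq rhs2 by simp
  qed
  ultimately show ?thesis by blast
qed

end
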